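(* Let $M$ be a finite abelian group of exponent greater than $2$, and let $f$ be a half-automorphism of $L_M$. Then $f((K,1))\in\mathcal{H}_M$.
   Context: Let $K=\{1,a,b,c\}$ be the Klein four-group. Set $L_M=K\times M$ with the operation $(A,x)*(B,y)=(AB,xy)$ if $B=1$, and $(A,x)*(B,y)=(AB,x^{-1}y)$ if $B\neq 1$. Write $(K,1)=\{(A,1):A\in K\}$ and $(1,M)=\{(1,x):x\in M\}$. Let $\mathcal{H}_M$ be the set of subloops $H$ of $L_M$ that are isomorphic to $K$ and satisfy $|H\cap(1,M)|=1$. A half-automorphism of a loop $L$ is a bijection $f:L\to L$ such that $f(XY)\in\{f(X)f(Y),f(Y)f(X)\}$ for all $X,Y\in L$. *)

theory Defs
  imports "HOL-Algebra.Group"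
begin

text \<open>The Klein four-group K, realised as bool x bool with componentwise xor;
  1 = (False,False), a = (True,False), b = (False,True), c = (True,True).\<close>

type_synonym klein = "bool \<times> bool"

definition klein_one :: klein where "klein_one = (False, False)"

definition klein_mult :: "klein \<Rightarrow> klein \<Rightarrow> klein" where
  "klein_mult A B = ((fst A \<noteq> fst B), (snd A \<noteq> snd B))"

definition group_exponent :: "('a, 'b) monoid_scheme \<Rightarrow> nat" where
  "group_exponent G = (LEAST n. 0 < n \<and> (\<forall>x\<in>carrier G. x [^]\<^bsub>G\<^esub> n = \<one>\<^bsub>G\<^esub>))"

definition L_carrier :: "('a, 'b) monoid_scheme \<Rightarrow> (klein \<times> 'a) set" where
  "L_carrier G = UNIV \<times> carrier G"

definition L_mult :: "('a, 'b) monoid_scheme \<Rightarrow> klein \<times> 'a \<Rightarrow> klein \<times> 'a \<Rightarrow> klein \<times> 'a" where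
  "L_mult G X Y = (case X of (A, x) \<Rightarrow> case Y of (B, y) \<Rightarrow>
     (klein_mult A B, if B = klein_one then x \<otimes>\<^bsub>G\<^esub> y else inv\<^bsub>G\<^esub> x \<otimes>\<^bsub>G\<^esub> y))"

definition L_one :: "('a, 'b) monoid_scheme \<Rightarrow> klein \<times> 'a" where
  "L_one G = (klein_one, \<one>\<^bsub>G\<^esub>)"

definition K1 :: "('a, 'b) monoid_scheme \<Rightarrow> (klein \<times> 'a) set" where
  "K1 G = {(A, \<one>\<^bsub>G\<^esub>) | A. True}"

definition oneM :: "('a, 'b) monoid_scheme \<Rightarrow> (klein \<times> 'a) set" where
  "oneM G = {(klein_one, x) | x. x \<in> carrier G}"

definition subloop :: "('a, 'b) monoid_scheme \<Rightarrow> (klein \<times> 'a) set \<Rightarrow> bool" where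
  "subloop G H \<longleftrightarrow> H \<subseteq> L_carrier G \<and> L_one G \<in> H \<and>
     (\<forall>X\<in>H. \<forall>Y\<in>H. L_mult G X Y \<in> H) \<and>
     (\<forall>X\<in>H. \<forall>Y\<in>H. (\<exists>Z\<in>H. L_mult G X Z = Y) \<and> (\<exists>Z\<in>H. L_mult G Z X = Y))"

definition iso_to_klein :: "('a, 'b) monoid_scheme \<Rightarrow> (klein \<times> 'a) set \<Rightarrow> bool" where
  "iso_to_klein G H \<longleftrightarrow> (\<exists>\<phi>. bij_betw \<phi> (UNIV :: klein set) H \<and>
     (\<forall>A B. \<phi> (klein_mult A B) = L_mult G (\<phi> A) (\<phi> B)))"

definition H_M :: "('a, 'b) monoid_scheme \<Rightarrow> (klein \<times> 'a) set set" where
  "H_M G = {H. subloop G H \<and> iso_to_klein G H \<and> card (H \<inter> oneM G) = 1}"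

definition half_automorphism :: "('a, 'b) monoid_scheme \<Rightarrow> (klein \<times> 'a \<Rightarrow> klein \<times> 'a) \<Rightarrow> bool" where
  "half_automorphism G f \<longleftrightarrow> bij_betw f (L_carrier G) (L_carrier G) \<and>
     (\<forall>X\<in>L_carrier G. \<forall>Y\<in>L_carrier G.
        f (L_mult G X Y) \<in> {L_mult G (f X) (f Y), L_mult G (f Y) (f X)})"

end

theory Submission
  imports Defs
begin

lemma L_mult_simp: "L_mult G (A,x) (B,y) = (klein_mult A B, if B = klein_one then x \<otimes>\<^bsub>G\<^esub> y else inv\<^bsub>G\<^esub> x \<otimes>\<^bsub>G\<^esub> y)"
  by (simp add: L_mult_def)

lemma L_carrier_iff[simp]: "(X \<in> L_carrier G) = (snd X \<in> carrier G)"
  by (cases X) (simp add: L_carrier_def)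

lemma km_one[simp]: "klein_mult A klein_one = A" "klein_mult klein_one A = A" "klein_mult A A = klein_one"
  by (auto simp: klein_mult_def klein_one_def)

lemma km_comm: "klein_mult A B = klein_mult B A"
  by (auto simp: klein_mult_def)

lemma km_eq_one: "(klein_mult A B = klein_one) = (A = B)"
  by (cases A; cases B) (auto simp: klein_mult_def klein_one_def)

lemma km_assoc: "klein_mult (klein_mult A B) C = klein_mult A (klein_mult B C)"
  by (auto simp: klein_mult_def)

context comm_group
begin

lemma hom_cases:
  assumes "half_automorphism G f" "X \<in> L_carrier G" "Y \<in> L_carrier G"
  shows "f (L_mult G X Y) = L_mult G (f X) (f Y) \<or> f (L_mult G X Y) = L_mult G (f Y) (f X)"
  using assms unfolding half_automorphism_def by blast

lemma f_closed:
  assumes "half_automorphism G f" "X \<in> L_carrier G"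
  shows "f X \<in> L_carrier G"
  using assms unfolding half_automorphism_def bij_betw_def by blast

lemma f_inj:
  assumes "half_automorphism G f" "X \<in> L_carrier G" "Y \<in> L_carrier G" "f X = f Y"
  shows "X = Y"
  using assms unfolding half_automorphism_def bij_betw_def inj_on_def by blast

lemma f_one:
  assumes h: "half_automorphism G f"
  shows "f (klein_one, \<one>) = (klein_one, \<one>)"
proof -
  obtain A x where fx: "f (klein_one, \<one>) = (A, x)" by fastforce
  have xc: "x \<in> carrier G" using f_closed[OF h, of "(klein_one, \<one>)"] fx by simp
  have "L_mult G (klein_one, \<one>) (klein_one, \<one>) = (klein_one, \<one>)" by (simp add: L_mult_simp)
  with hom_cases[OF h, of "(klein_one, \<one>)" "(klein_one, \<one>)"] fx
  have "(A, x) = L_mult G (A,x) (A,x)" by simp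
  hence A: "A = klein_one" by (simp add: L_mult_simp)
  with \<open>(A, x) = L_mult G (A,x) (A,x)\<close> have "x = x \<otimes> x" by (simp add: L_mult_simp)
  then have "x = \<one>" using xc by simp
  then show ?thesis using fx A by simp
qed

lemma fst_L_mult[simp]: "fst (L_mult G P Q) = klein_mult (fst P) (fst Q)"
  by (cases P; cases Q) (simp add: L_mult_simp)

lemma snd_L_mult: "snd (L_mult G P Q) = (if fst Q = klein_one then snd P \<otimes> snd Q else inv (snd P) \<otimes> snd Q)"
  by (cases P; cases Q) (simp add: L_mult_simp)

lemma f_sq:
  assumes h: "half_automorphism G f" "X \<in> L_carrier G"
  shows "f (L_mult G X X) = L_mult G (f X) (f X)"
  using hom_cases[OF assms assms(2)] by auto

lemma C1:
  assumes h: "half_automorphism G f" and x: "x \<in> carrier G" and xx: "x \<otimes> x \<noteq> \<one>"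
  shows "fst (f (klein_one, x)) = klein_one \<and> snd (f (klein_one, x)) \<otimes> snd (f (klein_one, x)) \<noteq> \<one>"
proof -
  obtain B v where fx: "f (klein_one, x) = (B, v)" by fastforce
  have vc: "v \<in> carrier G" using f_closed[OF h, of "(klein_one, x)"] fx x by simp
  have m: "L_mult G (klein_one, x) (klein_one, x) = (klein_one, x \<otimes> x)" by (simp add: L_mult_simp)
  have e: "f (klein_one, x \<otimes> x) = (klein_one, if B = klein_one then v \<otimes> v else inv v \<otimes> v)"
    using f_sq[OF h, of "(klein_one, x)"] m fx x by (simp add: L_mult_simp)
  have "f (klein_one, x \<otimes> x) \<noteq> f (klein_one, \<one>)"
  proof
    assume "f (klein_one, x \<otimes> x) = f (klein_one, \<one>)"
    from f_inj[OF h _ _ this] x xx show False by simp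
  qed
  hence "(if B = klein_one then v \<otimes> v else inv v \<otimes> v) \<noteq> \<one>" using e f_one[OF h] by simp
  then have "B = klein_one \<and> v \<otimes> v \<noteq> \<one>" using vc by (auto split: if_splits)
  then show ?thesis using fx by simp
qed

lemma lemC:
  assumes h: "half_automorphism G f" and x: "x \<in> carrier G"
    and y: "y \<in> carrier G" "y \<otimes> y \<noteq> \<one>"
  shows "fst (f (klein_one, x)) = klein_one"
proof (cases "x \<otimes> x = \<one>")
  case False
  then show ?thesis using C1[OF h x] by simp
next
  case True
  have "(x \<otimes> y) \<otimes> (x \<otimes> y) = (x \<otimes> x) \<otimes> (y \<otimes> y)" using x y by (simp add: m_ac)
  hence "(x \<otimes> y) \<otimes> (x \<otimes> y) \<noteq> \<one>" using True y x by simp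
  hence 1: "fst (f (klein_one, x \<otimes> y)) = klein_one" using C1[OF h, of "x \<otimes> y"] x y by simp
  have 2: "fst (f (klein_one, y)) = klein_one" using C1[OF h y] by simp
  have "L_mult G (klein_one, x) (klein_one, y) = (klein_one, x \<otimes> y)" by (simp add: L_mult_simp)
  with hom_cases[OF h, of "(klein_one, x)" "(klein_one, y)"] x y 1 2
  show ?thesis by (auto simp: km_comm)
qed

lemma lemA:
  assumes h: "half_automorphism G f" and A: "A \<noteq> klein_one" and z: "z \<in> carrier G"
    and y: "y \<in> carrier G" "y \<otimes> y \<noteq> \<one>"
  shows "fst (f (A, z)) \<noteq> klein_one"
proof
  assume a: "fst (f (A, z)) = klein_one"
  obtain w where fX: "f (A, z) = (klein_one, w)" using a by (cases "f (A, z)") auto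
  have wc: "w \<in> carrier G" using f_closed[OF h, of "(A, z)"] fX z by simp
  obtain v where fY: "f (klein_one, y) = (klein_one, v)" and vv: "v \<otimes> v \<noteq> \<one>"
    using C1[OF h y] by (cases "f (klein_one, y)") auto
  have vc: "v \<in> carrier G" using f_closed[OF h, of "(klein_one, y)"] fY y by simp
  have "L_mult G (A, z) (A, z) = (klein_one, \<one>)" using A z by (simp add: L_mult_simp)
  hence "(klein_one, \<one>) = L_mult G (klein_one, w) (klein_one, w)"
    using f_sq[OF h, of "(A, z)"] fX z f_one[OF h] by simp
  hence ww: "w \<otimes> w = \<one>" by (simp add: L_mult_simp)
  have XY: "L_mult G (A, z) (klein_one, y) = (A, z \<otimes> y)" by (simp add: L_mult_simp)
  have "f (A, z \<otimes> y) = (klein_one, w \<otimes> v)"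
    using hom_cases[OF h, of "(A, z)" "(klein_one, y)"] XY fX fY z y wc vc
    by (auto simp: L_mult_simp m_comm)
  moreover have "L_mult G (A, z \<otimes> y) (A, z \<otimes> y) = (klein_one, \<one>)" using A z y by (simp add: L_mult_simp)
  ultimately have "(klein_one, \<one>) = L_mult G (klein_one, w \<otimes> v) (klein_one, w \<otimes> v)"
    using f_sq[OF h, of "(A, z \<otimes> y)"] z y f_one[OF h] by simp
  hence "(w \<otimes> v) \<otimes> (w \<otimes> v) = \<one>" by (simp add: L_mult_simp)
  moreover have "(w \<otimes> v) \<otimes> (w \<otimes> v) = (w \<otimes> w) \<otimes> (v \<otimes> v)" using wc vc by (simp add: m_ac)
  ultimately show False using ww vv vc by simp
qed

lemma alg1: "r \<in> carrier G \<Longrightarrow> t \<in> carrier G \<Longrightarrow> (inv r \<otimes> t) \<otimes> (inv t \<otimes> r) = \<one>"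
proof -
  assume a: "r \<in> carrier G" "t \<in> carrier G"
  have "inv t \<otimes> r = inv (inv r \<otimes> t)" using a by (simp add: inv_mult_group)
  thus ?thesis using a by (simp add: r_inv)
qed
lemma alg2: "p \<in> carrier G \<Longrightarrow> v \<in> carrier G \<Longrightarrow> (p \<otimes> v) \<otimes> (p \<otimes> inv v) = p \<otimes> p"
proof -
  assume a: "p \<in> carrier G" "v \<in> carrier G"
  have "(p \<otimes> v) \<otimes> (p \<otimes> inv v) = p \<otimes> (p \<otimes> (v \<otimes> inv v))" using a by (simp add: m_assoc m_lcomm[of v p])
  thus ?thesis using a by simp
qed
lemma alg3: "p \<in> carrier G \<Longrightarrow> v \<in> carrier G \<Longrightarrow> (inv v \<otimes> p) \<otimes> (inv (inv v) \<otimes> p) = p \<otimes> p"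
proof -
  assume a: "p \<in> carrier G" "v \<in> carrier G"
  have "(inv v \<otimes> p) \<otimes> (inv (inv v) \<otimes> p) = (p \<otimes> inv v) \<otimes> (p \<otimes> v)" using a by (simp add: m_comm)
  also have "\<dots> = p \<otimes> (p \<otimes> (inv v \<otimes> v))" using a by (simp add: m_assoc m_lcomm[of "inv v" p])
  finally show ?thesis using a by simp
qed

lemma B:
  assumes h: "half_automorphism G f" and A: "A \<noteq> klein_one"
    and y: "y \<in> carrier G" "y \<otimes> y \<noteq> \<one>"
  shows "snd (f (A, \<one>)) \<otimes> snd (f (A, \<one>)) = \<one>"
proof -
  obtain B where B: "B \<noteq> klein_one" "B \<noteq> A"
  proof (cases "A = (True, False)")
    case True then show ?thesis using that[of "(False, True)"] by (auto simp: klein_one_def)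
  next
    case False then show ?thesis using that[of "(True, False)"] by (auto simp: klein_one_def)
  qed
  define C where "C = klein_mult A B"
  have C: "C \<noteq> klein_one" using B by (simp add: C_def km_eq_one)
  have CB: "klein_mult C B = A" "klein_mult B C = A"
    by (simp_all add: C_def km_assoc) (metis km_assoc km_comm km_one)
  define z where "z = y"
  have z: "z \<in> carrier G" "z \<otimes> z \<noteq> \<one>" using y by (auto simp: z_def)
  have zi: "z \<noteq> inv z"
  proof
    assume "z = inv z"
    hence "z \<otimes> z = inv z \<otimes> z" by simp
    thus False using z by simp
  qed
  obtain \<sigma> p where fA: "f (A, \<one>) = (\<sigma>, p)" by fastforce
  have pc: "p \<in> carrier G" using f_closed[OF h, of "(A, \<one>)"] fA by simp
  have \<sigma>: "\<sigma> \<noteq> klein_one" using lemA[OF h A one_closed y(1) y(2)] fA by simp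
  obtain v where fz: "f (klein_one, z) = (klein_one, v)"
    using lemC[OF h z(1) y] by (cases "f (klein_one, z)") auto
  obtain v' where fz': "f (klein_one, inv z) = (klein_one, v')"
    using lemC[OF h inv_closed[OF z(1)] y] by (cases "f (klein_one, inv z)") auto
  have vc: "v \<in> carrier G" using f_closed[OF h, of "(klein_one, z)"] fz z by simp
  have vc': "v' \<in> carrier G" using f_closed[OF h, of "(klein_one, inv z)"] fz' z by simp
  have "L_mult G (klein_one, z) (klein_one, inv z) = (klein_one, \<one>)" using z by (simp add: L_mult_simp)
  hence "v \<otimes> v' = \<one> \<or> v' \<otimes> v = \<one>"
    using hom_cases[OF h, of "(klein_one, z)" "(klein_one, inv z)"] fz fz' z f_one[OF h]
    by (auto simp: L_mult_simp)
  hence "v' \<otimes> v = \<one>" using vc vc' by (metis m_comm)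
  hence v': "v' = inv v" using inv_equality[OF _ vc vc'] by simp
  define m1 where "m1 = snd (f (A, z))"
  define m2 where "m2 = snd (f (A, inv z))"
  have e1: "L_mult G (A, \<one>) (klein_one, z) = (A, z)" using z by (simp add: L_mult_simp)
  have e2: "L_mult G (A, \<one>) (klein_one, inv z) = (A, inv z)" using z by (simp add: L_mult_simp)
  have h1: "f (A, z) = (\<sigma>, p \<otimes> v) \<or> f (A, z) = (\<sigma>, inv v \<otimes> p)"
    using hom_cases[OF h, of "(A, \<one>)" "(klein_one, z)"] e1 fA fz z \<sigma>
    by (auto simp: L_mult_simp)
  have h2: "f (A, inv z) = (\<sigma>, p \<otimes> inv v) \<or> f (A, inv z) = (\<sigma>, inv (inv v) \<otimes> p)"
    using hom_cases[OF h, of "(A, \<one>)" "(klein_one, inv z)"] e2 fA fz' v' z \<sigma>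
    by (auto simp: L_mult_simp)
  have ne: "f (A, z) \<noteq> f (A, inv z)"
  proof
    assume "f (A, z) = f (A, inv z)"
    from f_inj[OF h _ _ this] z zi show False by simp
  qed
  have q1: "inv (inv v) \<otimes> p = p \<otimes> v" using vc pc by (simp add: m_comm)
  have q2: "inv v \<otimes> p = p \<otimes> inv v" using vc pc by (simp add: m_comm)
  have q3: "(p \<otimes> inv v) \<otimes> (p \<otimes> v) = p \<otimes> p" using alg2[OF pc vc] pc vc by (metis inv_closed m_closed m_comm)
  have "(m1 = p \<otimes> v \<and> m2 = p \<otimes> inv v) \<or> (m1 = p \<otimes> inv v \<and> m2 = p \<otimes> v)"
    using h1 h2 ne unfolding m1_def m2_def q1 q2 by auto
  hence mm: "m1 \<otimes> m2 = p \<otimes> p" using alg2[OF pc vc] q3 by auto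
  obtain \<sigma>C r where fC: "f (C, \<one>) = (\<sigma>C, r)" by fastforce
  obtain \<sigma>B t where fB: "f (B, z) = (\<sigma>B, t)" by fastforce
  have rc: "r \<in> carrier G" using f_closed[OF h, of "(C, \<one>)"] fC by simp
  have tc: "t \<in> carrier G" using f_closed[OF h, of "(B, z)"] fB z by simp
  have \<sigma>C: "\<sigma>C \<noteq> klein_one" using lemA[OF h C one_closed y(1) y(2)] fC by simp
  have \<sigma>B: "\<sigma>B \<noteq> klein_one" using lemA[OF h B(1) z(1) y(1) y(2)] fB by simp
  have e3: "L_mult G (C, \<one>) (B, z) = (A, z)" using z B CB by (simp add: L_mult_simp)
  have e4: "L_mult G (B, z) (C, \<one>) = (A, inv z)" using z C CB by (simp add: L_mult_simp)
  have h3: "m1 = inv r \<otimes> t \<or> m1 = inv t \<otimes> r"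
    using hom_cases[OF h, of "(C, \<one>)" "(B, z)"] e3 fC fB z \<sigma>C \<sigma>B unfolding m1_def
    by (auto simp: L_mult_simp)
  have h4: "m2 = inv r \<otimes> t \<or> m2 = inv t \<otimes> r"
    using hom_cases[OF h, of "(B, z)" "(C, \<one>)"] e4 fC fB z \<sigma>C \<sigma>B unfolding m2_def
    by (auto simp: L_mult_simp)
  have f1: "fst (f (A, z)) = \<sigma>" using h1 by (metis fst_conv)
  have f2: "fst (f (A, inv z)) = \<sigma>" using h2 by (metis fst_conv)
  have "m1 \<noteq> m2"
  proof
    assume "m1 = m2"
    hence "f (A, z) = f (A, inv z)" using f1 f2 unfolding m1_def m2_def by (simp add: prod_eq_iff)
    with ne show False by simp
  qed
  hence "(m1 = inv r \<otimes> t \<and> m2 = inv t \<otimes> r) \<or> (m1 = inv t \<otimes> r \<and> m2 = inv r \<otimes> t)"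
    using h3 h4 by blast
  hence "m1 \<otimes> m2 = \<one>" using alg1[OF rc tc] alg1[OF tc rc] by auto
  thus ?thesis using mm fA by simp
qed


lemma main:
  assumes "group_exponent G > 2"
    and "half_automorphism G f"
  shows "f ` K1 G \<in> H_M G"
proof -
  note h = assms(2)
  have "\<exists>y\<in>carrier G. y \<otimes> y \<noteq> \<one>"
  proof (rule ccontr)
    assume "\<not> ?thesis"
    hence all: "\<And>x. x \<in> carrier G \<Longrightarrow> x \<otimes> x = \<one>" by blast
    have p2: "x [^] (2::nat) = x \<otimes> x" if "x \<in> carrier G" for x
      using that by (simp add: numeral_2_eq_2)
    have "0 < (2::nat) \<and> (\<forall>x\<in>carrier G. x [^] (2::nat) = \<one>)" using all p2 by simp
    hence "group_exponent G \<le> 2" unfolding group_exponent_def by (rule Least_le)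
    with assms(1) show False by simp
  qed
  then obtain y where y: "y \<in> carrier G" "y \<otimes> y \<noteq> \<one>" by blast
  define \<phi> where "\<phi> A = f (A, \<one>)" for A
  have fst\<phi>: "fst (\<phi> A) = klein_one \<longleftrightarrow> A = klein_one" for A
    using f_one[OF h] lemA[OF h _ one_closed y] unfolding \<phi>_def by (cases "A = klein_one") auto
  have c\<phi>: "snd (\<phi> A) \<in> carrier G" for A
    using f_closed[OF h, of "(A, \<one>)"] unfolding \<phi>_def by simp
  have sq\<phi>: "snd (\<phi> A) \<otimes> snd (\<phi> A) = \<one>" for A
    using f_one[OF h] B[OF h _ y] unfolding \<phi>_def by (cases "A = klein_one") auto
  have inv\<phi>: "inv (snd (\<phi> A)) = snd (\<phi> A)" for A
    using inv_equality[OF sq\<phi> c\<phi> c\<phi>] .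
  have mult\<phi>: "L_mult G (\<phi> A) (\<phi> B) = (klein_mult (fst (\<phi> A)) (fst (\<phi> B)), snd (\<phi> A) \<otimes> snd (\<phi> B))" for A B
  proof (cases "fst (\<phi> B) = klein_one")
    case True then show ?thesis by (simp add: prod_eq_iff snd_L_mult)
  next
    case False then show ?thesis by (simp add: prod_eq_iff snd_L_mult inv\<phi>)
  qed
  have hom\<phi>: "\<phi> (klein_mult A B) = L_mult G (\<phi> A) (\<phi> B)" for A B
  proof -
    have "L_mult G (A, \<one>) (B, \<one>) = (klein_mult A B, \<one>)" by (simp add: L_mult_simp)
    hence "\<phi> (klein_mult A B) = L_mult G (\<phi> A) (\<phi> B) \<or> \<phi> (klein_mult A B) = L_mult G (\<phi> B) (\<phi> A)"
      using hom_cases[OF h, of "(A, \<one>)" "(B, \<one>)"] unfolding \<phi>_def by simp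
    moreover have "L_mult G (\<phi> B) (\<phi> A) = L_mult G (\<phi> A) (\<phi> B)"
    proof -
      have "snd (\<phi> B) \<otimes> snd (\<phi> A) = snd (\<phi> A) \<otimes> snd (\<phi> B)" by (rule m_comm[OF c\<phi> c\<phi>])
      thus ?thesis unfolding mult\<phi> by (simp add: km_comm[of "fst (\<phi> B)"])
    qed
    ultimately show ?thesis by auto
  qed
  have inj\<phi>: "inj \<phi>"
    unfolding inj_def
  proof (intro allI impI)
    fix A B assume "\<phi> A = \<phi> B"
    hence "(A, \<one>) = (B, \<one>)" using f_inj[OF h, of "(A, \<one>)" "(B, \<one>)"] unfolding \<phi>_def by simp
    thus "A = B" by simp
  qed
  have img: "f ` K1 G = range \<phi>"
    unfolding K1_def \<phi>_def by auto
  have sub: "subloop G (range \<phi>)"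
    unfolding subloop_def
  proof (intro conjI ballI)
    show "range \<phi> \<subseteq> L_carrier G" using c\<phi> by auto
    show "L_one G \<in> range \<phi>" using f_one[OF h] unfolding L_one_def \<phi>_def by (metis rangeI)
  next
    fix X Y assume "X \<in> range \<phi>" "Y \<in> range \<phi>"
    then obtain A B where XY: "X = \<phi> A" "Y = \<phi> B" by blast
    show "L_mult G X Y \<in> range \<phi>" using hom\<phi>[of A B] XY by (metis rangeI)
    have "L_mult G X (\<phi> (klein_mult A B)) = Y"
      using hom\<phi>[of A "klein_mult A B"] XY by (simp add: km_assoc[symmetric])
    thus "\<exists>Z\<in>range \<phi>. L_mult G X Z = Y" by blast
    have "L_mult G (\<phi> (klein_mult B A)) X = Y"
      using hom\<phi>[of "klein_mult B A" A] XY by (simp add: km_assoc)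
    thus "\<exists>Z\<in>range \<phi>. L_mult G Z X = Y" by blast
  qed
  have iso: "iso_to_klein G (range \<phi>)"
    unfolding iso_to_klein_def using inj\<phi> hom\<phi> inj_on_imp_bij_betw by blast
  have "range \<phi> \<inter> oneM G = {(klein_one, \<one>)}"
  proof
    show "range \<phi> \<inter> oneM G \<subseteq> {(klein_one, \<one>)}"
    proof
      fix X assume "X \<in> range \<phi> \<inter> oneM G"
      then obtain A x where "X = \<phi> A" "X = (klein_one, x)" unfolding oneM_def by blast
      hence "fst (\<phi> A) = klein_one" by (metis fst_conv)
      hence "A = klein_one" using fst\<phi>[of A] by simp
      thus "X \<in> {(klein_one, \<one>)}" using \<open>X = \<phi> A\<close> f_one[OF h] unfolding \<phi>_def by simp
    qed
    show "{(klein_one, \<one>)} \<subseteq> range \<phi> \<inter> oneM G"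
      using f_one[OF h] unfolding \<phi>_def oneM_def by (auto intro: range_eqI[where x = klein_one])
  qed
  hence "card (range \<phi> \<inter> oneM G) = 1" by simp
  thus ?thesis unfolding H_M_def img using sub iso by simp
qed


end

theorem proposition4p2:
  fixes G :: "('a, 'b) monoid_scheme"
    and f :: "klein \<times> 'a \<Rightarrow> klein \<times> 'a"
  assumes "comm_group G"
    and "finite (carrier G)"
    and "group_exponent G > 2"
    and "half_automorphism G f"
  shows "f ` K1 G \<in> H_M G"
  using comm_group.main[OF assms(1) assms(3) assms(4)] .

end
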